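(* Let $f\in\mathbb{Q}[x]$ be such that $f=f_1\cdots f_u$ for distinct irreducible $f_1,\dots,f_u\in\mathbb{Q}[x]$. For each $i$, let $m_i\in\mathbb{N}$ be minimal such that $f_i\mid(x^{m_i}-r_i)$ for some $r_i\in\mathbb{Q}$, and suppose $f\mid(x^m-r)$ for some positive integer $m$ and $r\in\mathbb{Q}$. Then $\operatorname{lcm}(m_1,\dots,m_u)\mid m$. *)

theory Defs
  imports "HOL-Computational_Algebra.Polynomial"
begin

definition min_binom_exp :: "rat poly \<Rightarrow> nat" where
  "min_binom_exp g = (LEAST k. 0 < k \<and> (\<exists>r::rat. g dvd ([:0, 1:] ^ k - [:r:])))"

end

theory Submission
  imports Defs "HOL-Computational_Algebra.Polynomial_Factorial"
begin

lemma diff_pow_dvd: "(a - b) dvd (a ^ q - b ^ q :: 'a :: comm_ring_1)"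
proof (induction q)
  case 0 then show ?case by simp
next
  case (Suc q)
  have "a ^ Suc q - b ^ Suc q = a * (a ^ q - b ^ q) + (a - b) * b ^ q"
    by (simp add: algebra_simps)
  then show ?case using Suc by (simp add: dvd_add dvd_mult)
qed

lemma key:
  fixes g :: "rat poly" and m :: nat and r :: rat
  assumes irr: "irreducible g" and m: "0 < m" and d: "g dvd ([:0, 1:] ^ m - [:r:])"
  shows "min_binom_exp g dvd m"
proof -
  define P where "P = (\<lambda>k. 0 < k \<and> (\<exists>r::rat. g dvd ([:0, 1:] ^ k - [:r:])))"
  have Pm: "P m" using m d unfolding P_def by blast
  define k where "k = min_binom_exp g"
  have kdef: "k = (LEAST k. P k)" unfolding k_def min_binom_exp_def P_def by simp
  have Pk: "P k" unfolding kdef by (rule LeastI[of P m, OF Pm])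
  have minimal: "\<And>t. P t \<Longrightarrow> k \<le> t" unfolding kdef by (rule Least_le)
  from Pk obtain s where k0: "0 < k" and ds: "g dvd ([:0, 1:] ^ k - [:s:])"
    unfolding P_def by blast
  define q where "q = m div k"
  define t where "t = m mod k"
  have mqt: "m = k * q + t" unfolding q_def t_def by simp
  have tk: "t < k" unfolding t_def using k0 by simp
  have sp: "[:s:] ^ q = [:s ^ q:]" by (induction q) (auto simp: algebra_simps)
  let ?x = "[:0, 1::rat:]"
  have "(?x ^ k - [:s:]) dvd ((?x ^ k) ^ q - [:s:] ^ q)" by (rule diff_pow_dvd)
  hence "g dvd ((?x ^ k) ^ q - [:s:] ^ q)" using ds dvd_trans by blast
  hence "g dvd ?x ^ t * ((?x ^ k) ^ q - [:s:] ^ q)" by (rule dvd_mult)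
  moreover have "?x ^ t * ((?x ^ k) ^ q - [:s:] ^ q) = ?x ^ m - [:s ^ q:] * ?x ^ t"
    by (simp add: mqt algebra_simps power_add power_mult sp flip: pCons_one)
  ultimately have h1: "g dvd ?x ^ m - [:s ^ q:] * ?x ^ t" by metis
  have "g dvd (?x ^ m - [:r:]) - (?x ^ m - [:s ^ q:] * ?x ^ t)"
    using d h1 by (rule dvd_diff)
  moreover have "(?x ^ m - [:r:]) - (?x ^ m - [:s ^ q:] * ?x ^ t) = [:s ^ q:] * ?x ^ t - [:r:]"
    by (simp add: algebra_simps)
  ultimately have e: "g dvd [:s ^ q:] * ?x ^ t - [:r:]" by metis
  have "t = 0"
  proof (rule ccontr)
    assume t0: "t \<noteq> 0"
    have "\<exists>c. g dvd ?x ^ t - [:c:]"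
    proof (cases "s = 0")
      case True
      have pr: "prime_elem g" using irr by (rule field_poly_irreducible_imp_prime)
      have "g dvd ?x ^ k" using ds True by simp
      hence "g dvd ?x" using pr prime_elem_dvd_power by blast
      hence "g dvd ?x ^ t" using t0 dvd_trans[OF _ dvd_power[of t "[:0, 1::rat:]"]] by blast
      thus ?thesis by (intro exI[of _ 0]) simp
    next
      case False
      have "g dvd smult (1 / s ^ q) ([:s ^ q:] * ?x ^ t - [:r:])"
        using e by (simp add: dvd_smult)
      moreover have "smult (1 / s ^ q) ([:s ^ q:] * ?x ^ t - [:r:]) = ?x ^ t - [:r / s ^ q:]"
        using False by (simp add: algebra_simps smult_diff_right)
      ultimately show ?thesis by auto
    qed
    hence "P t" using t0 unfolding P_def by simp
    hence "k \<le> t" by (rule minimal)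
    thus False using tk by simp
  qed
  thus ?thesis unfolding k_def[symmetric] using mqt by simp
qed

theorem lemma3p4:
  fixes F :: "rat poly set" and f :: "rat poly" and m :: nat and r :: rat
  assumes "finite F"
    and "\<And>g. g \<in> F \<Longrightarrow> irreducible g"
    and "f = (\<Prod>g\<in>F. g)"
    and "0 < m"
    and "f dvd ([:0, 1:] ^ m - [:r:])"
  shows "Lcm (min_binom_exp ` F) dvd m"
proof (rule Lcm_least, clarify)
  fix g assume g: "g \<in> F"
  have "g dvd f" using assms(1,3) g by (simp add: dvd_prod_eqI)
  hence "g dvd ([:0, 1:] ^ m - [:r:])" using assms(5) dvd_trans by blast
  thus "min_binom_exp g dvd m" using key assms(2)[OF g] assms(4) by blast
qed

end
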